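(* Let $G$ be the Cayley graph of a group of intermediate growth with respect to a finite symmetric generating set. Then $G$ does not satisfy polynomial containment of any degree; that is, for every $d\geq 0$ and every constant $c\geq 1$, $G$ does not satisfy the $\{cn^d\}$-containment property.
   Context: A finitely generated group has intermediate growth if its volume growth $v(n)=|B_n(\mathrm{id})|$ grows faster than any polynomial and slower than any exponential function $e^{\epsilon n}$, $\epsilon>0$. Firefighter process on a graph $G$ with a sequence of integers $\{f(n)\}$: an initial fire occupies a finite set of vertices; at each time $n\geq 1$, at most $f(n)$ vertices that are not on fire become protected, and then the fire spreads to all unprotected neighbours of vertices on fire; once a vertex is protected or on fire it stays so forever. $G$ has the $\{f(n)\}$-containment property if for every finite initial fire there is a protection strategy (protecting at most $f(n)$ vertices at time $n$) such that the set of burning vertices is eventually constant. *)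

theory Defs
  imports "HOL-Algebra.Generated_Groups" Complex_Main
begin

fun word_ball :: "('a, 'b) monoid_scheme \<Rightarrow> 'a set \<Rightarrow> nat \<Rightarrow> 'a set" where
  "word_ball G S 0 = {\<one>\<^bsub>G\<^esub>}"
| "word_ball G S (Suc n) =
     word_ball G S n \<union> {x \<otimes>\<^bsub>G\<^esub> s | x s. x \<in> word_ball G S n \<and> s \<in> S}"

definition growth :: "('a, 'b) monoid_scheme \<Rightarrow> 'a set \<Rightarrow> nat \<Rightarrow> nat" where
  "growth G S n = card (word_ball G S n)"

definition intermediate_growth :: "('a, 'b) monoid_scheme \<Rightarrow> 'a set \<Rightarrow> bool" where
  "intermediate_growth G S \<longleftrightarrow>
     (\<forall>d::real. filterlim (\<lambda>n. real (growth G S n) / real n powr d) at_top sequentially)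
   \<and> (\<forall>\<epsilon>::real. \<epsilon> > 0 \<longrightarrow> (\<lambda>n. real (growth G S n) / exp (\<epsilon> * real n)) \<longlonglongrightarrow> 0)"

definition cayley_adj :: "('a, 'b) monoid_scheme \<Rightarrow> 'a set \<Rightarrow> 'a \<Rightarrow> 'a \<Rightarrow> bool" where
  "cayley_adj G S x y \<longleftrightarrow> x \<in> carrier G \<and> (\<exists>s\<in>S. y = x \<otimes>\<^bsub>G\<^esub> s)"

text \<open>Burning set after time n, for adjacency E, initial fire B0 and protection
  choices W k at times k \<ge> 1 (W 0 is ignored). At time n+1 the vertices
  W 1,...,W (n+1) are protected, then fire spreads to unprotected neighbours.\<close>
fun burning :: "('a \<Rightarrow> 'a \<Rightarrow> bool) \<Rightarrow> 'a set \<Rightarrow> (nat \<Rightarrow> 'a set) \<Rightarrow> nat \<Rightarrow> 'a set" where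
  "burning E B0 W 0 = B0"
| "burning E B0 W (Suc n) =
     burning E B0 W n \<union>
     {y. (\<exists>x\<in>burning E B0 W n. E x y) \<and> y \<notin> (\<Union>k\<in>{1..Suc n}. W k)}"

definition valid_strategy ::
  "'a set \<Rightarrow> ('a \<Rightarrow> 'a \<Rightarrow> bool) \<Rightarrow> (nat \<Rightarrow> real) \<Rightarrow> 'a set \<Rightarrow> (nat \<Rightarrow> 'a set) \<Rightarrow> bool" where
  "valid_strategy V E f B0 W \<longleftrightarrow>
     (\<forall>n\<ge>1. W n \<subseteq> V \<and> finite (W n) \<and> real (card (W n)) \<le> f n
            \<and> W n \<inter> burning E B0 W (n - 1) = {})"

definition containment :: "'a set \<Rightarrow> ('a \<Rightarrow> 'a \<Rightarrow> bool) \<Rightarrow> (nat \<Rightarrow> real) \<Rightarrow> bool" where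
  "containment V E f \<longleftrightarrow>
     (\<forall>B0. finite B0 \<and> B0 \<subseteq> V \<longrightarrow>
        (\<exists>W. valid_strategy V E f B0 W \<and>
             (\<exists>N. \<forall>n\<ge>N. burning E B0 W n = burning E B0 W N)))"

end

theory Submission
  imports Defs
begin

lemma word_ball_finite: "finite S \<Longrightarrow> finite (word_ball G S n)"
proof (induction n)
  case 0 then show ?case by simp
next
  case (Suc n)
  have "finite {x \<otimes>\<^bsub>G\<^esub> s | x s. x \<in> word_ball G S n \<and> s \<in> S}"
    by (rule finite_image_set2) (use Suc in auto)
  then show ?case using Suc by simp
qed

lemma word_ball_carrier:
  assumes "group G" "S \<subseteq> carrier G" shows "word_ball G S n \<subseteq> carrier G"
proof -
  interpret group G by fact
  show ?thesis
  proof (induction n)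
    case 0 then show ?case by simp
  next
    case (Suc n) then show ?case using assms by auto
  qed
qed

lemma word_ball_mono: "m \<le> n \<Longrightarrow> word_ball G S m \<subseteq> word_ball G S n"
proof (induction n)
  case 0 then show ?case by simp
next
  case (Suc n) then show ?case by (cases "m = Suc n") auto
qed

lemma growth_mono: "finite S \<Longrightarrow> m \<le> n \<Longrightarrow> growth G S m \<le> growth G S n"
  unfolding growth_def by (intro card_mono word_ball_finite word_ball_mono)

definition bd :: "('a, 'b) monoid_scheme \<Rightarrow> 'a set \<Rightarrow> 'a set \<Rightarrow> 'a set" where
  "bd G S A = {x \<otimes>\<^bsub>G\<^esub> s | x s. x \<in> A \<and> s \<in> S} - A"

lemma bd_finite: "finite A \<Longrightarrow> finite S \<Longrightarrow> finite (bd G S A)"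
  unfolding bd_def by (intro finite_Diff finite_image_set2) auto

lemma iso_a:
  fixes G (structure)
  assumes G: "group G" and S: "S \<subseteq> carrier G" "finite S" and A: "finite A" "A \<subseteq> carrier G"
  shows "g \<in> word_ball G S k \<Longrightarrow> card {a\<in>A. a \<otimes>\<^bsub>G\<^esub> g \<notin> A} \<le> k * card (bd G S A)"
proof (induction k arbitrary: g)
  case 0
  then have "{a\<in>A. a \<otimes>\<^bsub>G\<^esub> g \<notin> A} = {}" using A G by (auto simp: group.is_monoid monoid.r_one)
  then show ?case by (metis card.empty order_refl mult_0)
next
  case (Suc k)
  interpret group G by fact
  show ?case
  proof (cases "g \<in> word_ball G S k")
    case True
    then show ?thesis using Suc.IH[of g] by simp
  next
    case False
    then obtain x s where xs: "g = x \<otimes> s" "x \<in> word_ball G S k" "s \<in> S" using Suc.prems by auto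
    have xc: "x \<in> carrier G" using xs word_ball_carrier[OF G S(1)] by auto
    have sc: "s \<in> carrier G" using xs S by auto
    have sub: "{a\<in>A. a \<otimes> g \<notin> A} \<subseteq> {a\<in>A. a \<otimes> x \<notin> A} \<union> {a\<in>A. a \<otimes> x \<in> A \<and> (a \<otimes> x) \<otimes> s \<notin> A}"
      using xs xc sc A by (auto simp: m_assoc)
    have c2: "card {a\<in>A. a \<otimes> x \<in> A \<and> (a \<otimes> x) \<otimes> s \<notin> A} \<le> card (bd G S A)"
    proof (rule card_inj_on_le)
      show "inj_on (\<lambda>a. (a \<otimes> x) \<otimes> s) {a\<in>A. a \<otimes> x \<in> A \<and> (a \<otimes> x) \<otimes> s \<notin> A}"
        using A xc sc by (auto simp: inj_on_def subsetD)
      show "(\<lambda>a. (a \<otimes> x) \<otimes> s) ` {a\<in>A. a \<otimes> x \<in> A \<and> (a \<otimes> x) \<otimes> s \<notin> A} \<subseteq> bd G S A"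
        using xs unfolding bd_def by blast
      show "finite (bd G S A)" using bd_finite A S by blast
    qed
    have "card {a\<in>A. a \<otimes> g \<notin> A} \<le> card {a\<in>A. a \<otimes> x \<notin> A} + card {a\<in>A. a \<otimes> x \<in> A \<and> (a \<otimes> x) \<otimes> s \<notin> A}"
      by (rule order.trans[OF card_mono[OF _ sub] card_Un_le]) (use A in auto)
    also have "\<dots> \<le> k * card (bd G S A) + card (bd G S A)"
      using Suc.IH[OF xs(2)] c2 by simp
    finally show ?thesis by simp
  qed
qed

lemma card_filter_sum: "finite B \<Longrightarrow> card {g\<in>B. P g} = (\<Sum>g\<in>B. if P g then 1 else 0)"
  by (simp add: sum.inter_filter[symmetric])

lemma iso:
  fixes G (structure)
  assumes G: "group G" and S: "S \<subseteq> carrier G" "finite S" and A: "finite A" "A \<subseteq> carrier G"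
    and big: "2 * card A \<le> card (word_ball G S k)"
  shows "card A \<le> 2 * k * card (bd G S A)"
proof -
  interpret group G by fact
  define B where "B = word_ball G S k"
  have Bf: "finite B" unfolding B_def using S word_ball_finite by blast
  have Bc: "B \<subseteq> carrier G" unfolding B_def using word_ball_carrier[OF G S(1)] .
  have h1: "card B \<le> card A + card {g\<in>B. a \<otimes> g \<notin> A}" if a: "a \<in> A" for a
  proof -
    have "card {g\<in>B. a \<otimes> g \<in> A} \<le> card A"
    proof (rule card_inj_on_le)
      show "inj_on ((\<otimes>) a) {g \<in> B. a \<otimes> g \<in> A}" using a A Bc by (auto simp: inj_on_def subsetD)
    qed (use A in auto)
    moreover have "B = {g\<in>B. a \<otimes> g \<in> A} \<union> {g\<in>B. a \<otimes> g \<notin> A}" by auto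
    then have "card B \<le> card {g\<in>B. a \<otimes> g \<in> A} + card {g\<in>B. a \<otimes> g \<notin> A}"
      by (metis card_Un_le)
    ultimately show ?thesis by linarith
  qed
  have "card A * (card B - card A) \<le> (\<Sum>a\<in>A. card {g\<in>B. a \<otimes> g \<notin> A})"
  proof -
    have "(\<Sum>a\<in>A. card B - card A) \<le> (\<Sum>a\<in>A. card {g\<in>B. a \<otimes> g \<notin> A})"
      by (rule sum_mono) (use h1 in force)
    then show ?thesis by simp
  qed
  also have "\<dots> = (\<Sum>g\<in>B. card {a\<in>A. a \<otimes> g \<notin> A})"
    using A Bf by (simp add: card_filter_sum sum.swap[of _ A B])
  also have "\<dots> \<le> (\<Sum>g\<in>B. k * card (bd G S A))"
    by (rule sum_mono) (use iso_a[OF G S A] B_def in auto)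
  also have "\<dots> = card B * (k * card (bd G S A))" by simp
  finally have main: "card A * (card B - card A) \<le> card B * (k * card (bd G S A))" .
  have b2: "2 * card A \<le> card B" using big B_def by simp
  have "card A * card B \<le> 2 * (card A * (card B - card A))"
  proof -
    have "card B \<le> 2 * (card B - card A)" using b2 by linarith
    then have "card A * card B \<le> card A * (2 * (card B - card A))" by simp
    then show ?thesis by (simp add: algebra_simps)
  qed
  also have "\<dots> \<le> card B * (2 * k * card (bd G S A))" using main by simp
  finally have "card B * card A \<le> card B * (2 * k * card (bd G S A))" by (simp add: mult.commute)
  then show ?thesis
  proof (cases "card B = 0")
    case True then show ?thesis using b2 by simp
  qed simp
qed

lemma burn_facts:
  fixes G (structure)
  assumes G: "group G" and S: "S \<subseteq> carrier G" "finite S" and B0: "finite B0" "B0 \<subseteq> carrier G"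
  shows "finite (burning (cayley_adj G S) B0 W n) \<and> burning (cayley_adj G S) B0 W n \<subseteq> carrier G"
proof (induction n)
  case 0 then show ?case using B0 by simp
next
  case (Suc n)
  interpret group G by fact
  let ?A = "burning (cayley_adj G S) B0 W n"
  have sub: "burning (cayley_adj G S) B0 W (Suc n) \<subseteq> ?A \<union> {x \<otimes> s | x s. x \<in> ?A \<and> s \<in> S}"
    by (auto simp: cayley_adj_def)
  have "finite {x \<otimes> s | x s. x \<in> ?A \<and> s \<in> S}"
    by (rule finite_image_set2) (use Suc S in auto)
  then have f: "finite (burning (cayley_adj G S) B0 W (Suc n))"
    using Suc sub finite_subset by blast
  have "{x \<otimes> s | x s. x \<in> ?A \<and> s \<in> S} \<subseteq> carrier G" using Suc S by auto
  then show ?case using f sub Suc by blast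
qed

lemma burn_bd:
  fixes G (structure)
  assumes "burning (cayley_adj G S) B0 W n \<subseteq> carrier G"
  shows "bd G S (burning (cayley_adj G S) B0 W n) \<subseteq>
     (burning (cayley_adj G S) B0 W (Suc n) - burning (cayley_adj G S) B0 W n) \<union> (\<Union>k\<in>{1..Suc n}. W k)"
  using assms unfolding bd_def by (auto simp: cayley_adj_def)

lemma pow_diff: "(0::real) \<le> x \<Longrightarrow> (x+1)^Suc F \<le> x^Suc F + real (Suc F) * (x+1)^F"
proof (induction F)
  case 0 then show ?case by simp
next
  case (Suc F)
  have "(x+1)^Suc (Suc F) = (x+1) * (x+1)^Suc F" by simp
  also have "\<dots> \<le> (x+1) * (x^Suc F + real (Suc F) * (x+1)^F)"
    using Suc by (intro mult_left_mono) auto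
  also have "\<dots> = x * x^Suc F + x^Suc F + real (Suc F) * (x+1)^Suc F" by (simp add: algebra_simps)
  also have "\<dots> \<le> x^Suc (Suc F) + (x+1)^Suc F + real (Suc F) * (x+1)^Suc F"
    using Suc.prems power_mono[of x "x+1" "Suc F"] by simp
  also have "\<dots> = x^Suc (Suc F) + real (Suc (Suc F)) * (x+1)^Suc F" by (simp add: algebra_simps)
  finally show ?case .
qed

lemma arith_core:
  fixes a b x K j :: real and F :: nat
  assumes x: "x \<ge> 1" and ax: "a \<ge> x^(Suc F)" and aj: "a \<le> 4*j*b" and j: "j \<ge> 0"
    and jg: "j^(2*Suc F) < 2*a" and xK: "x^(Suc F) \<ge> 2*16^(Suc F)*K^(2*Suc F)"
    and K: "K \<ge> 0" and b: "b \<ge> 0"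
  shows "K * x^F \<le> b"
proof -
  define E where "E = Suc F"
  have a0: "a > 0" using ax x by (smt (verit) one_le_power)
  have "a^(2*E) \<le> (4*j*b)^(2*E)" using aj a0 by (intro power_mono) auto
  also have "\<dots> = 4^(2*E) * j^(2*E) * b^(2*E)" by (simp add: power_mult_distrib)
  also have "\<dots> \<le> 4^(2*E) * (2*a) * b^(2*E)"
    using jg E_def b by (intro mult_right_mono mult_left_mono) auto
  also have "(4::real)^(2*E) = 16^E" by (simp add: power_mult)
  finally have 0: "a^(2*E) \<le> 16^E * (2*a) * b^(2*E)" .
  have "a^(2*E) = a * a^(2*F+1)" unfolding E_def by simp
  with 0 have 1: "a * a^(2*F+1) \<le> a * (2 * 16^E * b^(2*E))"
    by (simp add: algebra_simps)
  then have 2: "a^(2*F+1) \<le> 2 * 16^E * b^(2*E)" using a0 by simp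
  have p1: "(x^E)^(2*F+1) \<le> a^(2*F+1)" using ax x E_def by (intro power_mono) auto
  have p2: "(x^E)^(2*F+1) = x^E * (x^F)^(2*E)"
    unfolding E_def by (simp add: power_mult[symmetric] power_add[symmetric] algebra_simps)
  have p3: "x^E * (x^F)^(2*E) \<ge> 2*16^E*K^(2*E) * (x^F)^(2*E)"
    using xK E_def x by (intro mult_right_mono) (auto simp del: power_Suc)
  have "2*16^E*(K * x^F)^(2*E) = 2*16^E*K^(2*E) * (x^F)^(2*E)" by (simp add: power_mult_distrib)
  also have "\<dots> \<le> 2 * 16^E * b^(2*E)" using p1 p2 p3 2 by linarith
  finally have "2*16^E*(K * x^F)^(2*E) \<le> 2 * 16^E * b^(2*E)" .
  then have "(K * x^F)^(2*E) \<le> b^(2*E)" by simp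
  then have "(K * x^F)^Suc (2*F+1) \<le> b^Suc (2*F+1)" unfolding E_def by simp
  then show ?thesis using b by (rule power_le_imp_le_base)
qed

lemma growth_poly:
  assumes "intermediate_growth G S"
  shows "\<exists>r0\<ge>1. \<forall>r\<ge>r0. real r ^ D \<le> real (growth G S r)"
proof -
  have "filterlim (\<lambda>n. real (growth G S n) / real n powr real D) at_top sequentially"
    using assms unfolding intermediate_growth_def by blast
  then have "eventually (\<lambda>n. 1 \<le> real (growth G S n) / real n powr real D) sequentially"
    by (simp add: filterlim_at_top)
  then obtain N where N: "\<And>n. n \<ge> N \<Longrightarrow> 1 \<le> real (growth G S n) / real n powr real D"
    by (auto simp: eventually_sequentially)
  have "real r ^ D \<le> real (growth G S r)" if r: "r \<ge> max N 1" for r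
  proof -
    have rp: "real r > 0" using r by simp
    have "1 \<le> real (growth G S r) / real r ^ D" using N[of r] r powr_realpow[OF rp] by simp
    then show ?thesis using rp by (simp add: le_divide_eq)
  qed
  then show ?thesis by (intro exI[of _ "max N 1"]) auto
qed

theorem corollary2:
  fixes G :: "('a, 'b) monoid_scheme" and S :: "'a set"
  assumes "group G"
    and "finite S" and "S \<subseteq> carrier G"
    and "\<And>s. s \<in> S \<Longrightarrow> inv\<^bsub>G\<^esub> s \<in> S"
    and "generate G S = carrier G"
    and "intermediate_growth G S"
  shows "\<forall>(d::real) (c::real). d \<ge> 0 \<and> c \<ge> 1 \<longrightarrow>
           \<not> containment (carrier G) (cayley_adj G S) (\<lambda>n. c * real n powr d)"
proof (intro allI impI notI)
  fix d c :: real
  assume dc: "d \<ge> 0 \<and> c \<ge> 1"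
  assume cont: "containment (carrier G) (cayley_adj G S) (\<lambda>n. c * real n powr d)"
  have G: "group G" and Sf: "finite S" and Sc: "S \<subseteq> carrier G" using assms by auto
  define e where "e = nat \<lceil>d\<rceil>"
  define F where "F = Suc e"
  define E where "E = Suc F"
  obtain r1 where r1: "r1 \<ge> 1" "\<forall>r\<ge>r1. real r ^ (2*E) \<le> real (growth G S r)"
    using growth_poly[OF assms(6)] by blast
  have gbig: "real r \<le> real (growth G S r)" if "r \<ge> r1" for r
  proof -
    have "real r ^ 1 \<le> real r ^ (2*E)" using that r1 by (intro power_increasing) (auto simp: E_def)
    then show ?thesis using r1 that by force
  qed
  define K where "K = real E * 2^F + c"
  have K0: "K \<ge> 0" using dc by (simp add: K_def)
  define T :: nat where "T = nat \<lceil>2*16^E*K^(2*E) + real (growth G S (r1+1))\<rceil> + 1"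
  have T1: "T \<ge> 1" by (simp add: T_def)
  have TE: "real T \<le> real T ^ E"
    using T1 power_increasing[of 1 E "real T"] by (simp add: E_def)
  have Tb: "2*16^E*K^(2*E) + real (growth G S (r1+1)) \<le> real T"
    unfolding T_def by linarith
  have KK: "0 \<le> 2*16^E*K^(2*E)" using K0 by simp
  have TK: "2*16^E*K^(2*E) \<le> real T ^ E" using Tb TE KK by linarith
  have TG: "real (growth G S (r1+1)) \<le> real T ^ E" using Tb TE KK by linarith
  define m where "m = max r1 (T^E)"
  have gm: "real T ^ E \<le> real (growth G S m)"
    using gbig[of m] by (simp add: m_def)
  define B0 where "B0 = word_ball G S m"
  have B0f: "finite B0" "B0 \<subseteq> carrier G"
    using word_ball_finite[OF Sf] word_ball_carrier[OF G Sc] by (auto simp: B0_def)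
  obtain W N where W: "valid_strategy (carrier G) (cayley_adj G S) (\<lambda>n. c * real n powr d) B0 W"
    and N: "\<forall>n\<ge>N. burning (cayley_adj G S) B0 W n = burning (cayley_adj G S) B0 W N"
    using cont B0f unfolding containment_def by blast
  define A where "A = burning (cayley_adj G S) B0 W"
  have Af: "finite (A n)" "A n \<subseteq> carrier G" for n
    using burn_facts[OF G Sc Sf B0f] by (auto simp: A_def)
  have Wv: "finite (W k) \<and> real (card (W k)) \<le> c * real k powr d" if "k \<ge> 1" for k
    using W that unfolding valid_strategy_def by blast
  have claim: "(real n + real T)^E \<le> real (card (A n))" for n
  proof (induction n)
    case 0
    then show ?case using gm by (simp add: A_def B0_def growth_def)
  next
    case (Suc n)
    define x where "x = real n + real T"
    have x1: "x \<ge> 1" using T1 by (simp add: x_def)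
    have xs: "real (Suc n) + real T = x + 1" by (simp add: x_def)
    define a where "a = real (card (A n))"
    have ax: "x^E \<le> a" using Suc by (simp add: a_def x_def)
    define P where "P = (\<Union>k\<in>{1..Suc n}. W k)"
    have Pf: "finite P" unfolding P_def using Wv by auto
    define q where "q = real (card P)"
    have hq: "q \<le> c * x^F"
    proof -
      have "q \<le> (\<Sum>k\<in>{1..Suc n}. real (card (W k)))"
        unfolding q_def P_def using card_UN_le[of "{1..Suc n}" W] by (simp flip: of_nat_sum)
      also have "\<dots> \<le> (\<Sum>k\<in>{1..Suc n}. c * real (Suc n) ^ e)"
      proof (rule sum_mono)
        fix k assume k: "k \<in> {1..Suc n}"
        have "real k powr d \<le> real (Suc n) powr d" using k dc by (intro powr_mono2) auto
        also have "\<dots> \<le> real (Suc n) powr real e"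
          unfolding e_def by (intro powr_mono) (auto simp: real_nat_ceiling_ge)
        also have "\<dots> = real (Suc n) ^ e" by (rule powr_realpow) simp
        finally show "real (card (W k)) \<le> c * real (Suc n) ^ e"
          using Wv[of k] k dc by (smt (verit) atLeastAtMost_iff mult_left_mono)
      qed
      also have "\<dots> = c * real (Suc n) ^ F" by (simp add: F_def algebra_simps)
      also have "\<dots> \<le> c * x^F" using dc T1 by (intro mult_left_mono power_mono) (auto simp: x_def)
      finally show ?thesis .
    qed
    define b where "b = real (card (bd G S (A n)))"
    have sub: "A n \<subseteq> A (Suc n)" by (auto simp: A_def)
    have hb: "b \<le> real (card (A (Suc n))) - a + q"
    proof -
      have bsub: "bd G S (A n) \<subseteq> (A (Suc n) - A n) \<union> P"
        using burn_bd[OF Af(2)[of n, unfolded A_def]] unfolding A_def P_def .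
      have "card (bd G S (A n)) \<le> card ((A (Suc n) - A n) \<union> P)"
        by (rule card_mono[OF _ bsub]) (use Af(1)[of "Suc n"] Pf in auto)
      also have "\<dots> \<le> card (A (Suc n) - A n) + card P" by (rule card_Un_le)
      also have "card (A (Suc n) - A n) = card (A (Suc n)) - card (A n)"
        using sub Af by (simp add: card_Diff_subset finite_subset)
      finally show ?thesis using card_mono[OF Af(1) sub]
        by (simp add: b_def a_def q_def)
    qed
    have hK: "K * x^F \<le> b"
    proof -
      have a1: "1 \<le> a" using ax x1 by (smt (verit) one_le_power)
      define k0 where "k0 = max r1 (2 * card (A n))"
      have ex: "\<exists>k. 2 * card (A n) \<le> growth G S k"
        using gbig[of k0] by (intro exI[of _ k0]) (simp add: k0_def)
      define k where "k = (LEAST k. 2 * card (A n) \<le> growth G S k)"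
      have kg: "2 * card (A n) \<le> growth G S k" unfolding k_def by (rule LeastI_ex[OF ex])
      have kbig: "k > r1 + 1"
      proof (rule ccontr)
        assume "\<not> k > r1 + 1"
        then have "growth G S k \<le> growth G S (r1+1)" by (intro growth_mono Sf) auto
        then have g1: "real (growth G S k) \<le> real (growth G S (r1+1))" by simp
        have "real T ^ E \<le> x ^ E" by (intro power_mono) (auto simp: x_def)
        then have "real (growth G S k) \<le> a" using g1 TG ax by linarith
        then show False using kg a1 by (simp add: a_def)
      qed
      define j where "j = k - 1"
      have jk: "j < k" "k = Suc j" using kbig by (auto simp: j_def)
      have jg: "growth G S j < 2 * card (A n)"
        using not_less_Least[OF jk(1)[unfolded k_def]] unfolding k_def j_def by simp
      have jg2: "real j ^ (2*E) < 2 * a"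
      proof -
        have "real j ^ (2*E) \<le> real (growth G S j)" using r1 kbig jk by auto
        also have "\<dots> < 2 * a" using jg by (simp add: a_def)
        finally show ?thesis .
      qed
      have iso1: "card (A n) \<le> 2 * k * card (bd G S (A n))"
        using iso[OF G Sc Sf Af(1) Af(2) kg[unfolded growth_def]] .
      have "real (card (A n)) \<le> real (2 * k * card (bd G S (A n)))" using iso1 by (simp only: of_nat_le_iff)
      then have "a \<le> 2 * real k * b" unfolding a_def b_def by simp
      also have "\<dots> \<le> 4 * real j * b" using jk kbig r1 by (intro mult_right_mono) (auto simp: b_def)
      finally have aj: "a \<le> 4 * real j * b" .
      show ?thesis
      proof -
        have TEx: "real T ^ E \<le> x ^ E" by (intro power_mono) (auto simp: x_def)
        have b0: "b \<ge> 0" by (simp add: b_def)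
        have p1: "x ^ Suc F \<le> a" using ax unfolding E_def .
        have p2: "real j ^ (2 * Suc F) < 2 * a" using jg2 unfolding E_def .
        have p3: "2 * 16 ^ Suc F * K ^ (2 * Suc F) \<le> x ^ Suc F" using TK TEx unfolding E_def by linarith
        show ?thesis by (rule arith_core[OF x1 p1 aj _ p2 p3 K0 b0]) simp
      qed
    qed
    have "(x+1)^E \<le> x^E + real E * (x+1)^F" using pow_diff[of x F] x1 by (simp add: E_def)
    also have "\<dots> \<le> x^E + real E * (2^F * x^F)"
    proof -
      have "(x+1)^F \<le> (2*x)^F" using x1 by (intro power_mono) auto
      then show ?thesis by (simp add: power_mult_distrib E_def)
    qed
    also have "\<dots> = x^E + (K - c) * x^F" by (simp add: K_def algebra_simps)
    also have "\<dots> \<le> a + b - q" using ax hK hq by (simp add: algebra_simps)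
    also have "\<dots> \<le> real (card (A (Suc n)))" using hb by simp
    finally have fin: "(x+1)^E \<le> real (card (A (Suc n)))" .
    show ?case unfolding xs by (rule fin)
  qed
  define n where "n = N + card (A N)"
  have "n \<ge> N" by (simp add: n_def)
  then have "A n = A N" using N unfolding A_def by blast
  moreover have "real n + real T \<le> (real n + real T)^E"
    using T1 power_increasing[of 1 E "real n + real T"] by (simp add: E_def)
  ultimately have "real n + real T \<le> real (card (A N))" using claim[of n] by simp
  then show False using T1 by (simp add: n_def)
qed

end
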